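(* Every strongly sofic monoid is surjunctive.
   Context: A monoid $M$ is strongly sofic if for every finite subset $K \subset M$ there exists an integer $\Delta_K \geq 1$ such that for every $\varepsilon > 0$ there exist a non-empty finite set $D$ and a map $\sigma \colon M \to \operatorname{Map}(D)$ (where $\operatorname{Map}(D)$ is the set of all maps $D \to D$ with composition) satisfying: (1) $\sigma(1_M) = \mathrm{Id}_D$; (2) $d_D^{\mathrm{Ham}}(\sigma(k_1k_2),\sigma(k_1)\sigma(k_2)) \leq \varepsilon$ for all $k_1,k_2 \in K$; (3) $d_D^{\mathrm{Ham}}(\sigma(k_1),\sigma(k_2)) \geq 1-\varepsilon$ for all distinct $k_1,k_2 \in K$; (4) $|\sigma(k)^{-1}(v)| \leq \Delta_K$ for all $k \in K$ and $v \in D$. Here $d_D^{\mathrm{Ham}}(f,g) = \frac{1}{|D|}|\{v \in D : f(v) \neq g(v)\}|$ is the Hamming metric. For a monoid $M$ and a finite set $A$, $A^M$ is the set of all maps $M \to A$ with the prodiscrete (product of discrete) topology and the shift action of $M$ given by $(mx)(m') = x(m'm)$ for $m,m' \in M$, $x \in A^M$. A cellular automaton is a continuous $M$-equivariant map $\tau \colon A^M \to A^M$. A monoid $M$ is surjunctive if for every finite set $A$, every injective cellular automaton $\tau \colon A^M \to A^M$ is surjective. *)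

theory Defs
  imports "HOL-Analysis.Analysis"
begin

definition ham :: "nat set \<Rightarrow> (nat \<Rightarrow> nat) \<Rightarrow> (nat \<Rightarrow> nat) \<Rightarrow> real" where
  "ham D f g = real (card {v \<in> D. f v \<noteq> g v}) / real (card D)"

(* Strongly sofic monoid; the finite sets D are taken as finite sets of naturals
   (every finite set is in bijection with one). *)
definition strongly_sofic :: "'m::monoid_mult itself \<Rightarrow> bool" where
  "strongly_sofic _ \<longleftrightarrow>
    (\<forall>K :: 'm set. finite K \<longrightarrow>
      (\<exists>\<Delta>::nat. \<Delta> \<ge> 1 \<and>
        (\<forall>\<epsilon>::real. \<epsilon> > 0 \<longrightarrow>
          (\<exists>(D::nat set) (\<sigma>::'m \<Rightarrow> nat \<Rightarrow> nat).
             finite D \<and> D \<noteq> {} \<and>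
             (\<forall>m. \<sigma> m \<in> D \<rightarrow> D) \<and>
             (\<forall>v\<in>D. \<sigma> 1 v = v) \<and>
             (\<forall>k1\<in>K. \<forall>k2\<in>K. ham D (\<sigma> (k1 * k2)) (\<sigma> k1 \<circ> \<sigma> k2) \<le> \<epsilon>) \<and>
             (\<forall>k1\<in>K. \<forall>k2\<in>K. k1 \<noteq> k2 \<longrightarrow> ham D (\<sigma> k1) (\<sigma> k2) \<ge> 1 - \<epsilon>) \<and>
             (\<forall>k\<in>K. \<forall>v\<in>D. card {u \<in> D. \<sigma> k u = v} \<le> \<Delta>)))))"

definition configs :: "'b set \<Rightarrow> ('m \<Rightarrow> 'b) set" where
  "configs A = (UNIV :: 'm set) \<rightarrow> A"

definition prodiscrete :: "'b set \<Rightarrow> ('m \<Rightarrow> 'b) topology" where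
  "prodiscrete A = product_topology (\<lambda>_. discrete_topology A) UNIV"

definition shift :: "'m::monoid_mult \<Rightarrow> ('m \<Rightarrow> 'b) \<Rightarrow> ('m \<Rightarrow> 'b)" where
  "shift m x = (\<lambda>m'. x (m' * m))"

definition cellular_automaton ::
    "'b set \<Rightarrow> (('m::monoid_mult \<Rightarrow> 'b) \<Rightarrow> ('m \<Rightarrow> 'b)) \<Rightarrow> bool" where
  "cellular_automaton A \<tau> \<longleftrightarrow>
     \<tau> \<in> configs A \<rightarrow> configs A \<and>
     continuous_map (prodiscrete A) (prodiscrete A) \<tau> \<and>
     (\<forall>m. \<forall>x \<in> configs A. \<tau> (shift m x) = shift m (\<tau> x))"

(* Surjunctive monoid; finite alphabets are taken as finite sets of naturals. *)
definition surjunctive :: "'m::monoid_mult itself \<Rightarrow> bool" where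
  "surjunctive _ \<longleftrightarrow>
    (\<forall>(A::nat set) (\<tau>::('m \<Rightarrow> nat) \<Rightarrow> ('m \<Rightarrow> nat)).
       finite A \<longrightarrow> cellular_automaton A \<tau> \<longrightarrow> inj_on \<tau> (configs A) \<longrightarrow>
       \<tau> ` configs A = configs A)"

end

theory Submission
  imports Defs
begin


lemma compact_cover_finite:
  assumes "compact_space T" "\<And>i. openin T {x\<in>topspace T. P i x}"
    "\<And>x. x\<in>topspace T \<Longrightarrow> \<exists>i. P i x"
  shows "\<exists>F. finite F \<and> (\<forall>x\<in>topspace T. \<exists>i\<in>F. P i x)"
proof -
  define f where "f i = {x\<in>topspace T. P i x}" for i
  have ca: "\<forall>\<U>. (\<forall>U \<in> \<U>. openin T U) \<and> topspace T \<subseteq> \<Union>\<U>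
            \<longrightarrow> (\<exists>\<F>. finite \<F> \<and> \<F> \<subseteq> \<U> \<and> topspace T \<subseteq> \<Union>\<F>)"
    using assms(1) unfolding compact_space_alt .
  have o: "(\<forall>U \<in> range f. openin T U) \<and> topspace T \<subseteq> \<Union>(range f)"
    using assms(2,3) unfolding f_def by auto
  obtain F' where F': "finite F'" "F' \<subseteq> range f" "topspace T \<subseteq> \<Union>F'"
    using mp[OF spec[OF ca, of "range f"] o] by blast
  obtain F where F: "finite F" "F' = f ` F"
    using finite_subset_image[OF F'(1,2)] by blast
  show ?thesis
  proof (intro exI[of _ F] conjI ballI)
    show "finite F" by (rule F(1))
    fix x assume "x \<in> topspace T"
    then have "x \<in> \<Union>(f ` F)" using F'(3) F(2) by blast
    then obtain i where "i \<in> F" "x \<in> f i" by blast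
    then show "\<exists>i\<in>F. P i x" unfolding f_def by blast
  qed
qed

lemma openin_disc_pred:
  assumes "continuous_map T (discrete_topology A) a" "continuous_map T (discrete_topology B) b"
  shows "openin T {x\<in>topspace T. R (a x) (b x)}"
proof -
  have c: "continuous_map T (discrete_topology (A \<times> B)) (\<lambda>x. (a x, b x))"
    using assms by (simp add: prod_topology_discrete_topology continuous_map_pairedI)
  have "openin T {x \<in> topspace T. (a x, b x) \<in> {(u,v)\<in>A\<times>B. R u v}}"
    by (rule openin_continuous_map_preimage[OF c]) auto
  moreover have "{x \<in> topspace T. (a x, b x) \<in> {(u,v)\<in>A\<times>B. R u v}} = {x\<in>topspace T. R (a x) (b x)}"
    using continuous_map_image_subset_topspace[OF c] by auto
  ultimately show ?thesis by simp
qed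

lemma topspace_prodiscrete[simp]: "topspace (prodiscrete A) = configs A"
  by (simp add: prodiscrete_def configs_def PiE_UNIV_domain)

lemma compact_prodiscrete: "finite A \<Longrightarrow> compact_space (prodiscrete A)"
  by (simp add: prodiscrete_def compact_space_product_topology compact_space_discrete_topology)

lemma cont_eval: "continuous_map (prodiscrete A) (discrete_topology A) (\<lambda>x. x m)"
  unfolding prodiscrete_def using continuous_map_product_projection[of m UNIV "\<lambda>_. discrete_topology A"] by simp


lemma cont_fst_eval: "continuous_map (prod_topology (prodiscrete A) Y) (discrete_topology A) (\<lambda>p. fst p m)"
  using continuous_map_compose[OF continuous_map_fst cont_eval[of A m]] by (simp add: o_def)
lemma cont_snd_eval: "continuous_map (prod_topology Y (prodiscrete A)) (discrete_topology A) (\<lambda>p. snd p m)"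
  using continuous_map_compose[OF continuous_map_snd cont_eval[of A m]] by (simp add: o_def)
lemma cont_tau_eval:
  assumes "cellular_automaton A \<tau>"
  shows "continuous_map (prodiscrete A) (discrete_topology A) (\<lambda>x. \<tau> x m)"
  using continuous_map_compose[of _ _ \<tau>, OF _ cont_eval[of A m]] assms
  unfolding cellular_automaton_def by (simp add: o_def)
lemma cont_fst_tau: "cellular_automaton A \<tau> \<Longrightarrow> continuous_map (prod_topology (prodiscrete A) Y) (discrete_topology A) (\<lambda>p. \<tau> (fst p) m)"
  using continuous_map_compose[OF continuous_map_fst cont_tau_eval] by (simp add: o_def)
lemma cont_snd_tau: "cellular_automaton A \<tau> \<Longrightarrow> continuous_map (prod_topology Y (prodiscrete A)) (discrete_topology A) (\<lambda>p. \<tau> (snd p) m)"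
  using continuous_map_compose[OF continuous_map_snd cont_tau_eval] by (simp add: o_def)

lemma compact_pair: "finite A \<Longrightarrow> compact_space (prod_topology (prodiscrete A) (prodiscrete A))"
  by (simp add: compact_space_prod_topology compact_prodiscrete)

lemma memory_set:
  fixes \<tau> :: "('m::monoid_mult \<Rightarrow> 'b) \<Rightarrow> ('m \<Rightarrow> 'b)"
  assumes "finite A" "cellular_automaton A \<tau>"
  shows "\<exists>S. finite S \<and> (\<forall>x\<in>configs A. \<forall>x'\<in>configs A. (\<forall>s\<in>S. x s = x' s) \<longrightarrow> \<tau> x 1 = \<tau> x' 1)"
proof -
  let ?T = "prod_topology (prodiscrete A) (prodiscrete A)"
  define P where "P i p = (case i of None \<Rightarrow> \<tau> (fst p) 1 = \<tau> (snd p) 1 | Some s \<Rightarrow> fst p s \<noteq> snd p s)"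
    for i :: "'m option" and p :: "('m \<Rightarrow> 'b) \<times> ('m \<Rightarrow> 'b)"
  have "\<exists>F. finite F \<and> (\<forall>x\<in>topspace ?T. \<exists>i\<in>F. P i x)"
  proof (rule compact_cover_finite)
    show "compact_space ?T" using compact_pair assms by blast
    show "openin ?T {x \<in> topspace ?T. P i x}" for i
    proof (cases i)
      case None
      then show ?thesis unfolding P_def
        using openin_disc_pred[OF cont_fst_tau[OF assms(2)] cont_snd_tau[OF assms(2)], where R="(=)"] by simp
    next
      case (Some s)
      then show ?thesis unfolding P_def
        using openin_disc_pred[OF cont_fst_eval cont_snd_eval, where R="(\<noteq>)"] by simp
    qed
    show "\<exists>i. P i p" if "p \<in> topspace ?T" for p
    proof (cases "\<exists>s. fst p s \<noteq> snd p s")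
      case True
      then obtain s where "fst p s \<noteq> snd p s" by blast
      then show ?thesis unfolding P_def by (intro exI[of _ "Some s"]) simp
    next
      case False
      then have "fst p = snd p" by auto
      then show ?thesis unfolding P_def by (intro exI[of _ None]) simp
    qed
  qed
  then obtain F where F: "finite F" "\<forall>x\<in>topspace ?T. \<exists>i\<in>F. P i x" by blast
  show ?thesis
  proof (intro exI[of _ "Some -` F"] conjI ballI impI)
    show "finite (Some -` F)" using F(1) by (simp add: finite_vimageI)
    fix x x' assume xs: "x \<in> configs A" "x' \<in> configs A" and ag: "\<forall>s\<in>Some -` F. x s = x' s"
    have "(x, x') \<in> topspace ?T" using xs by simp
    then obtain i where i: "i \<in> F" "P i (x, x')" using F(2) by blast
    then show "\<tau> x 1 = \<tau> x' 1" using ag unfolding P_def by (cases i) auto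
  qed
qed

lemma inverse_window:
  fixes \<tau> :: "('m::monoid_mult \<Rightarrow> 'b) \<Rightarrow> ('m \<Rightarrow> 'b)"
  assumes "finite A" "cellular_automaton A \<tau>" "inj_on \<tau> (configs A)"
  shows "\<exists>N. finite N \<and> (\<forall>x\<in>configs A. \<forall>x'\<in>configs A. (\<forall>n\<in>N. \<tau> x n = \<tau> x' n) \<longrightarrow> x 1 = x' 1)"
proof -
  let ?T = "prod_topology (prodiscrete A) (prodiscrete A)"
  define P where "P i p = (case i of None \<Rightarrow> fst p 1 = snd p 1 | Some s \<Rightarrow> \<tau> (fst p) s \<noteq> \<tau> (snd p) s)"
    for i :: "'m option" and p :: "('m \<Rightarrow> 'b) \<times> ('m \<Rightarrow> 'b)"
  have "\<exists>F. finite F \<and> (\<forall>x\<in>topspace ?T. \<exists>i\<in>F. P i x)"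
  proof (rule compact_cover_finite)
    show "compact_space ?T" using compact_pair assms by blast
    show "openin ?T {x \<in> topspace ?T. P i x}" for i
    proof (cases i)
      case None
      then show ?thesis unfolding P_def
        using openin_disc_pred[OF cont_fst_eval cont_snd_eval, where R="(=)"] by simp
    next
      case (Some s)
      then show ?thesis unfolding P_def
        using openin_disc_pred[OF cont_fst_tau[OF assms(2)] cont_snd_tau[OF assms(2)], where R="(\<noteq>)"] by simp
    qed
    show "\<exists>i. P i p" if "p \<in> topspace ?T" for p
    proof (cases "fst p 1 = snd p 1")
      case False
      then have "fst p \<noteq> snd p" by auto
      moreover have "fst p \<in> configs A" "snd p \<in> configs A" using that by auto
      ultimately have "\<tau> (fst p) \<noteq> \<tau> (snd p)" using assms(3) by (meson inj_on_def)
      then obtain s where "\<tau> (fst p) s \<noteq> \<tau> (snd p) s" by (auto simp: fun_eq_iff)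
      then show ?thesis unfolding P_def by (intro exI[of _ "Some s"]) simp
    next
      case True
      then show ?thesis unfolding P_def by (intro exI[of _ None]) simp
    qed
  qed
  then obtain F where F: "finite F" "\<forall>x\<in>topspace ?T. \<exists>i\<in>F. P i x" by blast
  show ?thesis
  proof (intro exI[of _ "Some -` F"] conjI ballI impI)
    show "finite (Some -` F)" using F(1) by (simp add: finite_vimageI)
    fix x x' assume xs: "x \<in> configs A" "x' \<in> configs A" and ag: "\<forall>s\<in>Some -` F. \<tau> x s = \<tau> x' s"
    have "(x, x') \<in> topspace ?T" using xs by simp
    then obtain i where i: "i \<in> F" "P i (x, x')" using F(2) by blast
    then show "x 1 = x' 1" using ag unfolding P_def by (cases i) auto
  qed
qed

lemma missing_pattern:
  fixes \<tau> :: "('m::monoid_mult \<Rightarrow> 'b) \<Rightarrow> ('m \<Rightarrow> 'b)"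
  assumes "finite A" "cellular_automaton A \<tau>" "y0 \<in> configs A" "y0 \<notin> \<tau> ` configs A"
  shows "\<exists>\<Omega>. finite \<Omega> \<and> (\<forall>x\<in>configs A. \<exists>w\<in>\<Omega>. \<tau> x w \<noteq> y0 w)"
proof -
  have "\<exists>F. finite F \<and> (\<forall>x\<in>topspace (prodiscrete A). \<exists>i\<in>F. \<tau> x i \<noteq> y0 i)"
  proof (rule compact_cover_finite)
    show "compact_space (prodiscrete A)" using compact_prodiscrete assms by blast
    show "openin (prodiscrete A) {x \<in> topspace (prodiscrete A). \<tau> x i \<noteq> y0 i}" for i
    proof -
      have "y0 i \<in> A" using assms(3) unfolding configs_def by auto
      then have "continuous_map (prodiscrete A) (discrete_topology A) (\<lambda>x. y0 i)" by simp
      from openin_disc_pred[OF cont_tau_eval[OF assms(2)] this, where R="(\<noteq>)"] show ?thesis by simp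
    qed
    show "\<exists>i. \<tau> x i \<noteq> y0 i" if "x \<in> topspace (prodiscrete A)" for x
    proof -
      have "\<tau> x \<noteq> y0" using that assms(4) by auto
      then show ?thesis by (auto simp: fun_eq_iff)
    qed
  qed
  then show ?thesis by simp
qed




lemma packing:
  fixes G :: "'a set" and R :: "'a \<Rightarrow> 'a \<Rightarrow> bool"
  assumes "finite G" "\<And>v. v \<in> G \<Longrightarrow> card {u\<in>G. R v u} \<le> L"
    "\<And>v. v\<in>G \<Longrightarrow> R v v" "\<And>u v. R u v \<Longrightarrow> R v u"
  shows "\<exists>V\<subseteq>G. (\<forall>a\<in>V. \<forall>b\<in>V. a \<noteq> b \<longrightarrow> \<not> R a b) \<and> card G \<le> L * card V"
  using assms(1,2,3)
proof (induction G rule: finite_psubset_induct)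
  case (psubset G)
  show ?case
  proof (cases "G = {}")
    case True
    then show ?thesis by auto
  next
    case False
    then obtain v where v: "v \<in> G" by blast
    define B where "B = {u\<in>G. R v u}"
    define G' where "G' = G - B"
    have vB: "v \<in> B" using v psubset.prems(2) B_def by auto
    have sub: "G' \<subset> G" using vB v unfolding G'_def B_def by auto
    have "\<exists>V\<subseteq>G'. (\<forall>a\<in>V. \<forall>b\<in>V. a \<noteq> b \<longrightarrow> \<not> R a b) \<and> card G' \<le> L * card V"
    proof (rule psubset.IH[OF sub])
      show "card {u \<in> G'. R w u} \<le> L" if "w \<in> G'" for w
      proof -
        have "card {u \<in> G'. R w u} \<le> card {u \<in> G. R w u}"
          by (rule card_mono) (use psubset.hyps G'_def in auto)
        also have "\<dots> \<le> L" using psubset.prems(1) that G'_def by auto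
        finally show ?thesis .
      qed
      show "R w w" if "w \<in> G'" for w using psubset.prems(2) that G'_def by auto
    qed
    then obtain V' where V': "V' \<subseteq> G'" "\<forall>a\<in>V'. \<forall>b\<in>V'. a \<noteq> b \<longrightarrow> \<not> R a b" "card G' \<le> L * card V'"
      by blast
    have vV': "v \<notin> V'" using V'(1) vB G'_def by auto
    have finV': "finite V'" using V'(1) psubset.hyps G'_def finite_subset by blast
    have noR: "\<not> R v b" if "b \<in> V'" for b using that V'(1) G'_def B_def by auto
    have "card G \<le> card G' + card B"
    proof -
      have "G = G' \<union> B" using G'_def B_def by auto
      then show ?thesis by (metis card_Un_le)
    qed
    also have "\<dots> \<le> L * card V' + L" using V'(3) psubset.prems(1)[OF v] B_def by auto
    also have "\<dots> = L * card (insert v V')" using vV' finV' by simp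
    finally have cG: "card G \<le> L * card (insert v V')" .
    show ?thesis
    proof (intro exI[of _ "insert v V'"] conjI)
      show "insert v V' \<subseteq> G" using v V'(1) G'_def by auto
      show "\<forall>a\<in>insert v V'. \<forall>b\<in>insert v V'. a \<noteq> b \<longrightarrow> \<not> R a b"
        using V'(2) noR assms(4) by blast
    qed (rule cG)
  qed
qed

lemma final_arith:
  fixes q r cV cB cD cG L :: nat and \<eta> c :: real
  assumes q: "q \<ge> 2" and r: "r \<ge> 1"
    and f1: "q^(r*cV) \<le> (q^r-1)^cV * q^cB"
    and f4: "real cB \<le> \<eta> * real cD" and f3: "cD \<le> cG + cB" and f5: "cG \<le> L*cV"
    and f6: "cD > 0"
    and c_def: "c = real r * ln (real q) - ln (real q ^ r - 1)"
    and eta: "\<eta> = c / (2 * (c + real L * ln (real q)))"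
  shows False
proof -
  have qo: "q^r \<ge> 2"
  proof -
    have "q^1 \<le> q^r" using q r by (intro power_increasing) auto
    then show ?thesis using q by simp
  qed
  have rq: "real q ^ r \<ge> 2" using qo
    by (metis of_nat_numeral of_nat_le_iff of_nat_power)
  have lnq: "ln (real q) > 0" using q by simp
  have c_pos: "c > 0"
  proof -
    have "ln (real q ^ r - 1) < ln (real q ^ r)" using rq q by (subst ln_less_cancel_iff) auto
    also have "\<dots> = real r * ln (real q)" using q by (simp add: ln_realpow)
    finally show ?thesis using c_def by simp
  qed
  have den: "c + real L * ln (real q) > 0" using c_pos lnq by (simp add: add_pos_nonneg)
  have key: "\<eta> * (c + real L * ln (real q)) = c / 2" unfolding eta using den by (auto simp: field_simps)
  have "real (q^(r*cV)) \<le> real ((q^r-1)^cV * q^cB)" using f1 by linarith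
  then have "real q ^ (r*cV) \<le> (real q ^ r - 1)^cV * real q ^ cB"
    using qo by (simp add: of_nat_diff)
  then have "ln (real q ^ (r*cV)) \<le> ln ((real q ^ r - 1)^cV * real q ^ cB)"
    using q rq by (subst ln_le_cancel_iff) auto
  then have l1: "real (r*cV) * ln (real q) \<le> real cV * ln (real q ^ r - 1) + real cB * ln (real q)"
    using q rq by (simp add: ln_realpow ln_mult)
  then have l2: "real cV * c \<le> real cB * ln (real q)"
    unfolding c_def by (simp add: algebra_simps)
  also have "\<dots> \<le> \<eta> * real cD * ln (real q)" using f4 lnq by (simp add: mult_right_mono)
  finally have l3: "real cV * c \<le> \<eta> * real cD * ln (real q)" .
  have l4: "real cD - \<eta> * real cD \<le> real L * real cV" using f3 f4 f5
  proof -
    have "real cD \<le> real cG + real cB" using f3 by linarith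
    moreover have "real cG \<le> real L * real cV" using f5
      by (metis of_nat_le_iff of_nat_mult)
    ultimately show ?thesis using f4 by linarith
  qed
  have "c * (real cD - \<eta> * real cD) \<le> c * (real L * real cV)"
    using l4 c_pos by (simp add: mult_left_mono)
  also have "\<dots> = real L * (real cV * c)" by simp
  also have "\<dots> \<le> real L * (\<eta> * real cD * ln (real q))" using l3 by (simp add: mult_left_mono)
  finally have "real cD * (c - \<eta> * (c + real L * ln (real q))) \<le> 0"
    by (simp add: algebra_simps)
  then have "real cD * (c / 2) \<le> 0" using key by simp
  moreover have "real cD * (c / 2) > 0" using f6 c_pos by simp
  ultimately show False by simp
qed




lemma card_UN_bound_real:
  assumes "finite I" "\<And>i. i\<in>I \<Longrightarrow> real (card (F i)) \<le> b"
  shows "real (card (\<Union>i\<in>I. F i)) \<le> real (card I) * b"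
proof -
  have "card (\<Union>i\<in>I. F i) \<le> (\<Sum>i\<in>I. card (F i))" using assms(1) by (rule card_UN_le)
  then have "real (card (\<Union>i\<in>I. F i)) \<le> (\<Sum>i\<in>I. real (card (F i)))"
    by (metis of_nat_le_iff of_nat_sum)
  also have "\<dots> \<le> (\<Sum>i\<in>I. b)" using assms(2) by (rule sum_mono)
  also have "\<dots> = real (card I) * b" by simp
  finally show ?thesis .
qed

lemma card_UN_bound_nat:
  assumes "finite I" "\<And>i. i\<in>I \<Longrightarrow> card (F i) \<le> b"
  shows "card (\<Union>i\<in>I. F i) \<le> card I * b"
proof -
  have "card (\<Union>i\<in>I. F i) \<le> (\<Sum>i\<in>I. card (F i))" using assms(1) by (rule card_UN_le)
  also have "\<dots> \<le> card I * b" using sum_bounded_above[of I "\<lambda>i. card (F i)" b] assms(2) by simp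
  finally show ?thesis .
qed

lemma card_split:
  assumes "finite D"
  shows "card {v\<in>D. P v} + card {v\<in>D. \<not> P v} = card D"
proof -
  have "D = {v\<in>D. P v} \<union> {v\<in>D. \<not> P v}" by auto
  moreover have "card ({v\<in>D. P v} \<union> {v\<in>D. \<not> P v}) = card {v\<in>D. P v} + card {v\<in>D. \<not> P v}"
    by (rule card_Un_disjoint) (use assms in auto)
  ultimately show ?thesis by simp
qed

lemma c_pos_lemma:
  fixes q r :: nat
  assumes q: "q \<ge> 2" and r: "r \<ge> 1"
  shows "real r * ln (real q) - ln (real q ^ r - 1) > 0"
proof -
  have qo: "q^r \<ge> 2"
  proof -
    have "q^1 \<le> q^r" using q r by (intro power_increasing) auto
    then show ?thesis using q by simp
  qed
  have rq: "real q ^ r \<ge> 2" using qo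
    by (metis of_nat_numeral of_nat_le_iff of_nat_power)
  have "ln (real q ^ r - 1) < ln (real q ^ r)" using rq q by (subst ln_less_cancel_iff) auto
  also have "\<dots> = real r * ln (real q)" using q by (simp add: ln_realpow)
  finally show ?thesis by simp
qed




definition approx :: "'m::monoid_mult set \<Rightarrow> nat \<Rightarrow> real \<Rightarrow> nat set \<Rightarrow> ('m \<Rightarrow> nat \<Rightarrow> nat) \<Rightarrow> bool" where
  "approx K \<Delta> \<epsilon> D \<sigma> \<longleftrightarrow> finite D \<and> D \<noteq> {} \<and>
             (\<forall>m. \<sigma> m \<in> D \<rightarrow> D) \<and>
             (\<forall>v\<in>D. \<sigma> 1 v = v) \<and>
             (\<forall>k1\<in>K. \<forall>k2\<in>K. ham D (\<sigma> (k1 * k2)) (\<sigma> k1 \<circ> \<sigma> k2) \<le> \<epsilon>) \<and>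
             (\<forall>k1\<in>K. \<forall>k2\<in>K. k1 \<noteq> k2 \<longrightarrow> ham D (\<sigma> k1) (\<sigma> k2) \<ge> 1 - \<epsilon>) \<and>
             (\<forall>k\<in>K. \<forall>v\<in>D. card {u \<in> D. \<sigma> k u = v} \<le> \<Delta>)"

lemma sofic_unfold:
  assumes "strongly_sofic TYPE('m::monoid_mult)" "finite (K::'m set)"
  shows "\<exists>\<Delta>. \<Delta> \<ge> 1 \<and> (\<forall>\<epsilon>>0. \<exists>D \<sigma>. approx K \<Delta> \<epsilon> D \<sigma>)"
  using assms unfolding strongly_sofic_def approx_def by simp

lemma main_contra:
  fixes \<tau> :: "('m::monoid_mult \<Rightarrow> nat) \<Rightarrow> ('m \<Rightarrow> nat)" and A :: "nat set"
  assumes sofic: "strongly_sofic TYPE('m)"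
    and finA: "finite A" and qA: "card A \<ge> 2"
    and ca: "cellular_automaton A \<tau>"
    and S: "finite S" "\<forall>x\<in>configs A. \<forall>x'\<in>configs A. (\<forall>s\<in>S. x s = x' s) \<longrightarrow> \<tau> x 1 = \<tau> x' 1"
    and N: "finite N" "\<forall>x\<in>configs A. \<forall>x'\<in>configs A. (\<forall>n\<in>N. \<tau> x n = \<tau> x' n) \<longrightarrow> x 1 = x' 1"
    and Om: "finite \<Omega>" "\<Omega> \<noteq> {}" "\<forall>x\<in>configs A. \<exists>w\<in>\<Omega>. \<tau> x w \<noteq> y0 w"
    and y0: "y0 \<in> configs A"
  shows False
proof -
  define K where "K = S \<union> N \<union> \<Omega>"
  have finK: "finite K" using S N Om K_def by simp
  have SK: "S \<subseteq> K" and NK: "N \<subseteq> K" and OK: "\<Omega> \<subseteq> K" using K_def by auto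
  have Kpos: "card K > 0" using finK OK Om(2) by (metis card_gt_0_iff subset_empty)
  define q where "q = card A"
  define r where "r = card \<Omega>"
  have q2: "q \<ge> 2" using qA q_def by simp
  have r1: "r \<ge> 1" using Om r_def by (simp add: Suc_leI card_gt_0_iff)
  obtain \<Delta> :: nat where \<Delta>1: "\<Delta> \<ge> 1" and \<Delta>2: "\<forall>\<epsilon>>0. \<exists>D \<sigma>. approx K \<Delta> \<epsilon> D \<sigma>"
    using sofic_unfold[OF sofic finK] by blast
  define L where "L = r * r * \<Delta>"
  define c where "c = real r * ln (real q) - ln (real q ^ r - 1)"
  define \<eta> where "\<eta> = c / (2 * (c + real L * ln (real q)))"
  have c_pos: "c > 0" unfolding c_def by (rule c_pos_lemma[OF q2 r1])
  have lnq: "ln (real q) \<ge> 0" using q2 by simp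
  have eta_pos: "\<eta> > 0" unfolding \<eta>_def using c_pos lnq
    by (intro divide_pos_pos) (auto intro!: add_pos_nonneg)
  define k where "k = card K"
  define \<epsilon> where "\<epsilon> = \<eta> / (2 * real k ^ 2)"
  have kpos: "real k > 0" using Kpos k_def by simp
  have eps_pos: "\<epsilon> > 0" unfolding \<epsilon>_def using eta_pos kpos by simp
  have eps_eta: "2 * (real k ^ 2 * \<epsilon>) = \<eta>" unfolding \<epsilon>_def using kpos by simp
  obtain D and \<sigma> :: "'m \<Rightarrow> nat \<Rightarrow> nat" where ap: "approx K \<Delta> \<epsilon> D \<sigma>"
    using \<Delta>2 eps_pos by blast
  have D1: "finite D" and D2: "D \<noteq> {}" and D3: "\<forall>m. \<sigma> m \<in> D \<rightarrow> D" and D4: "\<forall>v\<in>D. \<sigma> 1 v = v"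
    and D5: "\<forall>k1\<in>K. \<forall>k2\<in>K. ham D (\<sigma> (k1 * k2)) (\<sigma> k1 \<circ> \<sigma> k2) \<le> \<epsilon>"
    and D6: "\<forall>k1\<in>K. \<forall>k2\<in>K. k1 \<noteq> k2 \<longrightarrow> ham D (\<sigma> k1) (\<sigma> k2) \<ge> 1 - \<epsilon>"
    and D7: "\<forall>k\<in>K. \<forall>v\<in>D. card {u \<in> D. \<sigma> k u = v} \<le> \<Delta>"
    using ap unfolding approx_def by auto
  have \<sigma>D: "\<sigma> m v \<in> D" if "v \<in> D" for m v using D3 that by (simp add: Pi_iff)
  have cDpos: "real (card D) > 0" using D1 D2 by (simp add: card_gt_0_iff)

  have e1: "real (card {v\<in>D. \<sigma> (k1*k2) v \<noteq> \<sigma> k1 (\<sigma> k2 v)}) \<le> \<epsilon> * real (card D)"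
    if "k1 \<in> K" "k2 \<in> K" for k1 k2
  proof -
    have "real (card {v\<in>D. \<sigma> (k1*k2) v \<noteq> \<sigma> k1 (\<sigma> k2 v)}) / real (card D) \<le> \<epsilon>"
      using D5 that unfolding ham_def by (simp add: o_def)
    then show ?thesis using cDpos by (simp add: pos_divide_le_eq)
  qed
  have e2: "real (card {v\<in>D. \<sigma> k1 v = \<sigma> k2 v}) \<le> \<epsilon> * real (card D)"
    if "k1 \<in> K" "k2 \<in> K" "k1 \<noteq> k2" for k1 k2
  proof -
    have "1 - \<epsilon> \<le> real (card {v\<in>D. \<sigma> k1 v \<noteq> \<sigma> k2 v}) / real (card D)"
      using D6 that unfolding ham_def by simp
    then have "(1 - \<epsilon>) * real (card D) \<le> real (card {v\<in>D. \<sigma> k1 v \<noteq> \<sigma> k2 v})"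
      using cDpos by (simp add: pos_le_divide_eq)
    moreover have "card {v\<in>D. \<sigma> k1 v = \<sigma> k2 v} + card {v\<in>D. \<sigma> k1 v \<noteq> \<sigma> k2 v} = card D"
      using card_split[OF D1, of "\<lambda>v. \<sigma> k1 v = \<sigma> k2 v"] by simp
    ultimately show ?thesis by (simp add: algebra_simps)
  qed
  define B1 where "B1 = (\<Union>p\<in>K\<times>K. {v\<in>D. \<sigma> (fst p * snd p) v \<noteq> \<sigma> (fst p) (\<sigma> (snd p) v)})"
  define B2 where "B2 = (\<Union>p\<in>{p\<in>K\<times>K. fst p \<noteq> snd p}. {v\<in>D. \<sigma> (fst p) v = \<sigma> (snd p) v})"
  define G where "G = D - (B1 \<union> B2)"
  have cB1: "real (card B1) \<le> real (card (K\<times>K)) * (\<epsilon> * real (card D))"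
    unfolding B1_def by (rule card_UN_bound_real) (use finK e1 in auto)
  have cB2': "real (card B2) \<le> real (card {p\<in>K\<times>K. fst p \<noteq> snd p}) * (\<epsilon> * real (card D))"
    unfolding B2_def by (rule card_UN_bound_real) (use finK e2 in auto)
  have "card {p\<in>K\<times>K. fst p \<noteq> snd p} \<le> card (K\<times>K)"
    by (rule card_mono) (use finK in auto)
  then have cB2: "real (card B2) \<le> real (card (K\<times>K)) * (\<epsilon> * real (card D))"
    using cB2' eps_pos cDpos
    by (meson dual_order.trans mult_right_mono of_nat_le_iff less_eq_real_def mult_pos_pos)
  have KK: "real (card (K\<times>K)) = real k ^ 2" using k_def by (simp add: card_cartesian_product power2_eq_square)
  define cB where "cB = card (B1 \<union> B2)"
  have f4: "real cB \<le> \<eta> * real (card D)"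
  proof -
    have "real cB \<le> real (card B1) + real (card B2)" unfolding cB_def
      by (metis card_Un_le of_nat_add of_nat_le_iff)
    also have "\<dots> \<le> 2 * (real k ^ 2 * \<epsilon>) * real (card D)" using cB1 cB2 KK by simp
    finally show ?thesis using eps_eta by simp
  qed
  have finG: "finite G" using D1 G_def by simp
  have GD: "G \<subseteq> D" using G_def by auto
  have f3: "card D \<le> card G + cB"
  proof -
    have "D \<subseteq> G \<union> (B1 \<union> B2)" using G_def by auto
    then have "card D \<le> card (G \<union> (B1 \<union> B2))"
    proof (rule card_mono[rotated])
      have "G \<union> (B1 \<union> B2) \<subseteq> D" unfolding G_def B1_def B2_def by auto
      then show "finite (G \<union> (B1 \<union> B2))" using D1 by (rule finite_subset)
    qed
    also have "\<dots> \<le> card G + cB" unfolding cB_def by (rule card_Un_le)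
    finally show ?thesis .
  qed
  have good_mult: "\<sigma> (k1*k2) v = \<sigma> k1 (\<sigma> k2 v)" if "v \<in> G" "k1 \<in> K" "k2 \<in> K" for v k1 k2
  proof (rule ccontr)
    assume ne: "\<sigma> (k1*k2) v \<noteq> \<sigma> k1 (\<sigma> k2 v)"
    have "v \<in> B1" unfolding B1_def using ne that G_def by (intro UN_I[of "(k1,k2)"]) auto
    then show False using that(1) G_def by auto
  qed
  have good_inj: "\<sigma> k1 v \<noteq> \<sigma> k2 v" if "v \<in> G" "k1 \<in> K" "k2 \<in> K" "k1 \<noteq> k2" for v k1 k2
  proof
    assume eq: "\<sigma> k1 v = \<sigma> k2 v"
    have "v \<in> B2" unfolding B2_def using eq that G_def by (intro UN_I[of "(k1,k2)"]) auto
    then show False using that(1) G_def by auto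
  qed
  define P where "P = PiE D (\<lambda>_. A)"
  define xv where "xv v z = (\<lambda>m. z (\<sigma> m v))" for v :: nat and z :: "nat \<Rightarrow> nat"
  define \<tau>D where "\<tau>D z = restrict (\<lambda>v. \<tau> (xv v z) 1) D" for z
  have finP: "finite P" unfolding P_def using D1 finA by (simp add: finite_PiE)
  have xv_conf: "xv v z \<in> configs A" if "v \<in> D" "z \<in> P" for v z
    using that \<sigma>D unfolding configs_def xv_def P_def by (auto simp: PiE_iff)
  have \<tau>conf: "\<tau> x \<in> configs A" if "x \<in> configs A" for x
    using ca that unfolding cellular_automaton_def by blast
  have \<tau>D_P: "\<tau>D z \<in> P" if "z \<in> P" for z
  proof -
    have "\<tau> (xv v z) 1 \<in> A" if "v \<in> D" for v
      using \<tau>conf[OF xv_conf[OF that \<open>z \<in> P\<close>]] unfolding configs_def by auto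
    then show ?thesis unfolding P_def \<tau>D_def by auto
  qed
  have shift_eq: "\<tau> x n = \<tau> (shift n x) 1" if "x \<in> configs A" for x n
  proof -
    have "\<tau> (shift n x) = shift n (\<tau> x)" using ca that unfolding cellular_automaton_def by blast
    then show ?thesis unfolding shift_def by simp
  qed
  have shift_conf: "shift n x \<in> configs A" if "x \<in> configs A" for x n
    using that unfolding configs_def shift_def by auto
  have L1: "\<tau> (xv v z) n = \<tau>D z (\<sigma> n v)" if "v \<in> G" "n \<in> K" "z \<in> P" for v n z
  proof -
    have vD: "v \<in> D" using that GD by auto
    have "\<tau> (xv v z) n = \<tau> (shift n (xv v z)) 1" using shift_eq xv_conf vD that by blast
    also have "\<dots> = \<tau> (xv (\<sigma> n v) z) 1"
    proof -
      have "\<forall>s\<in>S. shift n (xv v z) s = xv (\<sigma> n v) z s"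
        using good_mult[OF that(1) _ that(2)] SK unfolding shift_def xv_def by auto
      moreover have "shift n (xv v z) \<in> configs A" using shift_conf xv_conf vD that by blast
      moreover have "xv (\<sigma> n v) z \<in> configs A" using xv_conf \<sigma>D vD that by blast
      ultimately show ?thesis using S(2) by blast
    qed
    also have "\<dots> = \<tau>D z (\<sigma> n v)" unfolding \<tau>D_def using \<sigma>D vD by simp
    finally show ?thesis .
  qed
  have L2: "z v = z' v" if "z \<in> P" "z' \<in> P" "\<tau>D z = \<tau>D z'" "v \<in> G" for z z' v
  proof -
    have vD: "v \<in> D" using that GD by auto
    have "\<forall>n\<in>N. \<tau> (xv v z) n = \<tau> (xv v z') n"
      using L1 that NK by auto
    then have "xv v z 1 = xv v z' 1" using N(2) xv_conf vD that by blast
    then show ?thesis unfolding xv_def using D4 vD by simp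
  qed
  have L3: "\<exists>w\<in>\<Omega>. \<tau>D z (\<sigma> w v) \<noteq> y0 w" if "z \<in> P" "v \<in> G" for z v
  proof -
    have "xv v z \<in> configs A" using xv_conf that GD by blast
    then obtain w where w: "w \<in> \<Omega>" "\<tau> (xv v z) w \<noteq> y0 w" using Om(3) by blast
    have "w \<in> K" using w(1) OK by auto
    then have eq: "\<tau>D z (\<sigma> w v) = \<tau> (xv v z) w" using L1[OF that(2) _ that(1)] by simp
    show ?thesis
    proof (rule bexI[of _ w])
      show "\<tau>D z (\<sigma> w v) \<noteq> y0 w" using eq w(2) by simp
    qed (rule w(1))
  qed
  obtain a0 where a0: "a0 \<in> A" using q2 q_def by (metis card.empty ex_in_conv not_numeral_le_zero)
  define ext where "ext w = (\<lambda>u. if u \<in> G then w u else if u \<in> D then a0 else undefined)"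
    for w :: "nat \<Rightarrow> nat"
  have ext_P: "ext w \<in> P" if "w \<in> PiE G (\<lambda>_. A)" for w
    using that a0 GD unfolding ext_def P_def by (auto simp: PiE_iff extensional_def)
  have lower: "q ^ card G \<le> card (\<tau>D ` P)"
  proof -
    have "card (PiE G (\<lambda>_. A)) = q ^ card G" using finG q_def by (simp add: card_PiE)
    moreover have "card (PiE G (\<lambda>_. A)) \<le> card (\<tau>D ` P)"
    proof (rule card_inj_on_le)
      show "inj_on (\<lambda>w. \<tau>D (ext w)) (PiE G (\<lambda>_. A))"
      proof (rule inj_onI)
        fix w w' assume w: "w \<in> PiE G (\<lambda>_. A)" and w': "w' \<in> PiE G (\<lambda>_. A)"
          and eq: "\<tau>D (ext w) = \<tau>D (ext w')"
        have "w v = w' v" if "v \<in> G" for v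
          using L2[OF ext_P[OF w] ext_P[OF w'] eq that] that unfolding ext_def by simp
        then show "w = w'" using w w' by (auto simp: PiE_iff intro: extensionalityI)
      qed
      show "(\<lambda>w. \<tau>D (ext w)) ` PiE G (\<lambda>_. A) \<subseteq> \<tau>D ` P" using ext_P by auto
      show "finite (\<tau>D ` P)" using finP by simp
    qed
    ultimately show ?thesis by simp
  qed
  define W where "W v = (\<lambda>w. \<sigma> w v) ` \<Omega>" for v
  have cardW: "card (W v) = r" if "v \<in> G" for v
  proof -
    have "inj_on (\<lambda>w. \<sigma> w v) \<Omega>" using good_inj[OF that] OK by (auto simp: inj_on_def)
    then show ?thesis unfolding W_def r_def by (simp add: card_image)
  qed
  have WD: "W v \<subseteq> D" if "v \<in> D" for v using \<sigma>D that W_def by auto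
  have confl: "card {u\<in>G. W v \<inter> W u \<noteq> {}} \<le> L" if "v \<in> G" for v
  proof -
    have "{u\<in>G. W v \<inter> W u \<noteq> {}} \<subseteq> (\<Union>p\<in>\<Omega>\<times>\<Omega>. {u\<in>D. \<sigma> (snd p) u = \<sigma> (fst p) v})"
      unfolding W_def using GD by fastforce
    then have "card {u\<in>G. W v \<inter> W u \<noteq> {}} \<le> card (\<Union>p\<in>\<Omega>\<times>\<Omega>. {u\<in>D. \<sigma> (snd p) u = \<sigma> (fst p) v})"
      by (rule card_mono[rotated]) (use D1 Om(1) in simp)
    also have "\<dots> \<le> card (\<Omega>\<times>\<Omega>) * \<Delta>"
    proof (rule card_UN_bound_nat)
      show "finite (\<Omega>\<times>\<Omega>)" using Om(1) by simp
      show "card {u\<in>D. \<sigma> (snd p) u = \<sigma> (fst p) v} \<le> \<Delta>" if "p \<in> \<Omega>\<times>\<Omega>" for p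
      proof -
        have "snd p \<in> K" using that OK by auto
        moreover have "\<sigma> (fst p) v \<in> D" using \<sigma>D GD \<open>v \<in> G\<close> by auto
        ultimately show ?thesis using D7 by blast
      qed
    qed
    also have "\<dots> = L" unfolding L_def r_def by (simp add: card_cartesian_product)
    finally show ?thesis .
  qed
  obtain V where V: "V \<subseteq> G" "\<forall>a\<in>V. \<forall>b\<in>V. a \<noteq> b \<longrightarrow> \<not> (W a \<inter> W b \<noteq> {})" "card G \<le> L * card V"
  proof -
    have "\<exists>V\<subseteq>G. (\<forall>a\<in>V. \<forall>b\<in>V. a \<noteq> b \<longrightarrow> \<not> (W a \<inter> W b \<noteq> {})) \<and> card G \<le> L * card V"
    proof (rule packing[OF finG])
      show "card {u\<in>G. W v \<inter> W u \<noteq> {}} \<le> L" if "v \<in> G" for v using confl that by blast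
      show "W v \<inter> W v \<noteq> {}" if "v \<in> G" for v using Om(2) W_def by auto
      show "W v \<inter> W u \<noteq> {}" if "W u \<inter> W v \<noteq> {}" for u v using that by blast
    qed
    then show ?thesis using that by blast
  qed
  define U where "U = \<Union>(W ` V)"
  have finV: "finite V" using V(1) finG finite_subset by blast
  have UD: "U \<subseteq> D" unfolding U_def using WD V(1) GD by blast
  have cardU: "card U = card V * r"
  proof -
    have "card U = (\<Sum>v\<in>V. card (W v))" unfolding U_def
    proof (rule card_UN_disjoint[OF finV])
      show "\<forall>v\<in>V. finite (W v)" unfolding W_def using Om(1) by simp
      show "\<forall>a\<in>V. \<forall>b\<in>V. a \<noteq> b \<longrightarrow> W a \<inter> W b = {}" using V(2) by blast
    qed
    also have "\<dots> = (\<Sum>v\<in>V. r)" using cardW V(1) by (intro sum.cong) auto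
    finally show ?thesis by simp
  qed
  have f2: "r * card V \<le> card D" using card_mono[OF D1 UD] cardU by (simp add: mult.commute)
  define Q where "Q = PiE \<Omega> (\<lambda>_. A) - {restrict y0 \<Omega>}"
  have y0r: "restrict y0 \<Omega> \<in> PiE \<Omega> (\<lambda>_. A)" using y0 unfolding configs_def by auto
  have cardQ: "card Q = q ^ r - 1"
    unfolding Q_def using y0r Om(1) q_def r_def by (simp add: card_PiE)
  define \<Phi> where "\<Phi> y = (restrict y (D - U), restrict (\<lambda>v. restrict (\<lambda>w. y (\<sigma> w v)) \<Omega>) V)"
    for y :: "nat \<Rightarrow> nat"
  have inj\<Phi>: "inj_on \<Phi> P"
  proof (rule inj_onI)
    fix y y' assume y: "y \<in> P" and y': "y' \<in> P" and eq: "\<Phi> y = \<Phi> y'"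
    have e1: "restrict y (D - U) = restrict y' (D - U)" using eq unfolding \<Phi>_def by simp
    have e2: "restrict (\<lambda>v. restrict (\<lambda>w. y (\<sigma> w v)) \<Omega>) V = restrict (\<lambda>v. restrict (\<lambda>w. y' (\<sigma> w v)) \<Omega>) V"
      using eq unfolding \<Phi>_def by simp
    have "y u = y' u" if "u \<in> D" for u
    proof (cases "u \<in> U")
      case True
      then obtain v w where vw: "v \<in> V" "w \<in> \<Omega>" "u = \<sigma> w v" unfolding U_def W_def by auto
      have "restrict (\<lambda>w. y (\<sigma> w v)) \<Omega> = restrict (\<lambda>w. y' (\<sigma> w v)) \<Omega>"
        using fun_cong[OF e2, of v] vw(1) by simp
      then have "restrict (\<lambda>w. y (\<sigma> w v)) \<Omega> w = restrict (\<lambda>w. y' (\<sigma> w v)) \<Omega> w"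
        by (rule arg_cong[where f="\<lambda>f. f w"])
      then have "y (\<sigma> w v) = y' (\<sigma> w v)" using vw(2) by simp
      then show ?thesis using vw(3) by simp
    next
      case False
      then show ?thesis using fun_cong[OF e1, of u] that by simp
    qed
    then show "y = y'" using y y' unfolding P_def by (auto simp: PiE_iff intro: extensionalityI)
  qed
  have \<Phi>_into: "\<Phi> ` (\<tau>D ` P) \<subseteq> PiE (D - U) (\<lambda>_. A) \<times> PiE V (\<lambda>_. Q)"
  proof
    fix t assume "t \<in> \<Phi> ` (\<tau>D ` P)"
    then obtain z where z: "z \<in> P" and t: "t = \<Phi> (\<tau>D z)" by auto
    have yP: "\<tau>D z \<in> P" using \<tau>D_P z by blast
    have "restrict (\<lambda>w. \<tau>D z (\<sigma> w v)) \<Omega> \<in> Q" if "v \<in> V" for v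
    proof -
      have vG: "v \<in> G" using that V(1) by auto
      have "restrict (\<lambda>w. \<tau>D z (\<sigma> w v)) \<Omega> \<in> PiE \<Omega> (\<lambda>_. A)"
        using yP \<sigma>D vG GD unfolding P_def by (auto simp: PiE_iff)
      moreover have "restrict (\<lambda>w. \<tau>D z (\<sigma> w v)) \<Omega> \<noteq> restrict y0 \<Omega>"
      proof
        assume eqr: "restrict (\<lambda>w. \<tau>D z (\<sigma> w v)) \<Omega> = restrict y0 \<Omega>"
        have "\<tau>D z (\<sigma> w v) = y0 w" if "w \<in> \<Omega>" for w
          using arg_cong[OF eqr, where f="\<lambda>f. f w"] that by simp
        then have "\<forall>w\<in>\<Omega>. \<tau>D z (\<sigma> w v) = y0 w" by blast
        then show False using L3[OF z vG] by blast
      qed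
      ultimately show ?thesis unfolding Q_def by simp
    qed
    moreover have "restrict (\<tau>D z) (D - U) \<in> PiE (D - U) (\<lambda>_. A)"
      using yP unfolding P_def by (auto simp: PiE_iff)
    ultimately show "t \<in> PiE (D - U) (\<lambda>_. A) \<times> PiE V (\<lambda>_. Q)"
      unfolding t \<Phi>_def by auto
  qed
  have upper: "card (\<tau>D ` P) \<le> q ^ (card D - r * card V) * (q ^ r - 1) ^ card V"
  proof -
    have "card (\<tau>D ` P) \<le> card (PiE (D - U) (\<lambda>_. A) \<times> PiE V (\<lambda>_. Q))"
    proof (rule card_inj_on_le[OF _ \<Phi>_into])
      show "inj_on \<Phi> (\<tau>D ` P)"
        by (rule inj_on_subset[OF inj\<Phi>]) (use \<tau>D_P in auto)
      show "finite (PiE (D - U) (\<lambda>_. A) \<times> PiE V (\<lambda>_. Q))"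
      proof -
        have finQ: "finite Q" unfolding Q_def using Om(1) finA by (simp add: finite_PiE)
        show ?thesis by (intro finite_cartesian_product finite_PiE) (use D1 finA finV finQ in auto)
      qed
    qed
    also have "\<dots> = q ^ card (D - U) * (q ^ r - 1) ^ card V"
      using D1 finV cardQ q_def by (simp add: card_cartesian_product card_PiE)
    also have "card (D - U) = card D - r * card V"
      using card_Diff_subset[OF finite_subset[OF UD D1] UD] cardU by (simp add: mult.commute)
    finally show ?thesis .
  qed
  define cV where "cV = card V"
  define cD where "cD = card D"
  define cG where "cG = card G"
  have f1: "q^(r*cV) \<le> (q^r-1)^cV * q^cB"
  proof -
    have qpos: "q > 0" using q2 by simp
    have "q^cD \<le> q^(cG + cB)" using f3 q2 unfolding cD_def cG_def by (intro power_increasing) auto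
    also have "\<dots> = q^cG * q^cB" by (simp add: power_add)
    also have "\<dots> \<le> (q ^ (cD - r * cV) * (q ^ r - 1) ^ cV) * q^cB"
      using lower upper unfolding cD_def cG_def cV_def by (intro mult_right_mono) auto
    finally have a: "q^cD \<le> q ^ (cD - r * cV) * ((q ^ r - 1) ^ cV * q^cB)" by (simp add: mult.assoc)
    have "q^cD = q ^ (cD - r * cV) * q^(r*cV)" using f2 unfolding cD_def cV_def
      by (simp add: power_add[symmetric])
    with a have "q ^ (cD - r * cV) * q^(r*cV) \<le> q ^ (cD - r * cV) * ((q ^ r - 1) ^ cV * q^cB)" by simp
    then show ?thesis using qpos by simp
  qed
  show False
  proof (rule final_arith[OF q2 r1 f1 _ _ _ _ c_def \<eta>_def])
    show "real cB \<le> \<eta> * real cD" using f4 cD_def by simp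
    show "cD \<le> cG + cB" using f3 cD_def cG_def by simp
    show "cG \<le> L * cV" using V(3) cG_def cV_def by simp
    show "cD > 0" using cDpos cD_def by simp
  qed
qed




theorem theorem1p1:
  assumes "strongly_sofic TYPE('m::monoid_mult)"
  shows "surjunctive TYPE('m)"
  unfolding surjunctive_def
proof (intro allI impI)
  fix A :: "nat set" and \<tau> :: "('m \<Rightarrow> nat) \<Rightarrow> ('m \<Rightarrow> nat)"
  assume finA: "finite A" and ca: "cellular_automaton A \<tau>" and inj: "inj_on \<tau> (configs A)"
  have sub: "\<tau> ` configs A \<subseteq> configs A" using ca unfolding cellular_automaton_def by blast
  show "\<tau> ` configs A = configs A"
  proof (rule ccontr)
    assume "\<tau> ` configs A \<noteq> configs A"
    then obtain y0 where y0: "y0 \<in> configs A" "y0 \<notin> \<tau> ` configs A" using sub by blast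
    show False
    proof (cases "card A \<ge> 2")
      case False
      then have "card A \<le> Suc 0" by simp
      then have single: "\<forall>a\<in>A. \<forall>b\<in>A. a = b" using finA card_le_Suc0_iff_eq by blast
      have "\<tau> y0 \<in> configs A" using sub y0(1) by blast
      then have "\<tau> y0 = y0" using y0(1) single unfolding configs_def by (auto simp: Pi_iff)
      then show False using y0 by (metis image_eqI)
    next
      case True
      obtain S where S: "finite S" "\<forall>x\<in>configs A. \<forall>x'\<in>configs A. (\<forall>s\<in>S. x s = x' s) \<longrightarrow> \<tau> x 1 = \<tau> x' 1"
        using memory_set[OF finA ca] by blast
      obtain N where N: "finite N" "\<forall>x\<in>configs A. \<forall>x'\<in>configs A. (\<forall>n\<in>N. \<tau> x n = \<tau> x' n) \<longrightarrow> x 1 = x' 1"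
        using inverse_window[OF finA ca inj] by blast
      obtain \<Omega> where Om: "finite \<Omega>" "\<forall>x\<in>configs A. \<exists>w\<in>\<Omega>. \<tau> x w \<noteq> y0 w"
        using missing_pattern[OF finA ca y0] by blast
      have "\<Omega> \<noteq> {}" using Om(2) y0(1) by blast
      show False by (rule main_contra[OF assms finA True ca S N Om(1) \<open>\<Omega> \<noteq> {}\<close> Om(2) y0(1)])
    qed
  qed
qed


end
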